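(* Let $W$ be a representation $\sigma\mapsto A_\sigma$ of a semigroup $\Sigma$ and let $\Gamma:W\times\mathbb{R}^p\to W$ be smooth with $\Gamma(A_\sigma X;\lambda)=A_\sigma\Gamma(X;\lambda)$ for all $\sigma\in\Sigma$, $X$, $\lambda$. Let $X_0\in W$, $\lambda_0\in\mathbb{R}^p$ with $\Gamma(X_0;\lambda_0)=0$ and $A_\sigma X_0=X_0$ for all $\sigma\in\Sigma$. Let $L_0=D_X\Gamma(X_0;\lambda_0)$ with semisimple part $L_0^S$. Then $\ker L_0^S$ and $\mathrm{im}\,L_0^S$ are subrepresentations, and the reduced map $r:\ker L_0^S\times\Lambda\to\ker L_0^S$ (constructed as in the context) is $\Sigma$-equivariant: $r(A_\sigma X_{\ker};\lambda)=A_\sigma r(X_{\ker};\lambda)$ for all $\sigma\in\Sigma$ and all $(X_{\ker},\lambda)$ sufficiently close to $((X_0)_{\ker},\lambda_0)$, where $A_\sigma$ denotes the restriction to $\ker L_0^S$.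
   Context: A representation of a semigroup $\Sigma$ in a finite-dimensional real vector space $W$ is a map $\sigma\mapsto A_\sigma\in\mathfrak{gl}(W)$ with $A_\sigma A_\tau=A_{\sigma\tau}$; a subrepresentation is a subspace invariant under all $A_\sigma$. For a linear $L_0$, $L_0=L_0^S+L_0^N$ is its decomposition into commuting semisimple and nilpotent parts; $W=\mathrm{im}\,L_0^S\oplus\ker L_0^S$ with projections $P_{\mathrm{im}},P_{\ker}$, and write $X=X_{\mathrm{im}}+X_{\ker}$. Set $\Gamma_{\mathrm{im}}=P_{\mathrm{im}}\circ\Gamma$, $\Gamma_{\ker}=P_{\ker}\circ\Gamma$. Since $D_{X_{\mathrm{im}}}\Gamma_{\mathrm{im}}(X_0;\lambda_0)$ is invertible on $\mathrm{im}\,L_0^S$, the implicit function theorem gives a smooth $X_{\mathrm{im}}(X_{\ker},\lambda)$, defined for $X_{\ker}$ near $(X_0)_{\ker}$ and $\lambda$ in a neighbourhood $\Lambda$ of $\lambda_0$, which is the unique solution near $(X_0)_{\mathrm{im}}$ of $\Gamma_{\mathrm{im}}(X_{\mathrm{im}}+X_{\ker};\lambda)=0$. The reduced map is $r(X_{\ker};\lambda)=\Gamma_{\ker}(X_{\mathrm{im}}(X_{\ker},\lambda)+X_{\ker};\lambda)$. *)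

theory Defs
  imports "HOL-Analysis.Analysis" "HOL-Computational_Algebra.Polynomial"
begin

definition representation :: "('s::semigroup_mult \<Rightarrow> 'w::real_vector \<Rightarrow> 'w) \<Rightarrow> bool" where
  "representation A \<longleftrightarrow> (\<forall>\<sigma>. linear (A \<sigma>)) \<and> (\<forall>\<sigma> \<tau>. A \<sigma> \<circ> A \<tau> = A (\<sigma> * \<tau>))"

definition subrep :: "('s \<Rightarrow> 'w::real_vector \<Rightarrow> 'w) \<Rightarrow> 'w set \<Rightarrow> bool" where
  "subrep A V \<longleftrightarrow> subspace V \<and> (\<forall>\<sigma>. \<forall>x\<in>V. A \<sigma> x \<in> V)"

fun iter_deriv :: "'a::real_normed_vector list \<Rightarrow> ('a \<Rightarrow> 'b::real_normed_vector) \<Rightarrow> 'a \<Rightarrow> 'b" where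
  "iter_deriv [] f = f"
| "iter_deriv (v # vs) f = (\<lambda>x. frechet_derivative (iter_deriv vs f) (at x) v)"

definition smooth :: "('a::real_normed_vector \<Rightarrow> 'b::real_normed_vector) \<Rightarrow> bool" where
  "smooth f \<longleftrightarrow> (\<forall>vs x. iter_deriv vs f differentiable (at x))"

definition poly_lin :: "real poly \<Rightarrow> ('w::real_vector \<Rightarrow> 'w) \<Rightarrow> 'w \<Rightarrow> 'w" where
  "poly_lin p T = (\<lambda>x. \<Sum>i\<le>degree p. coeff p i *\<^sub>R (T ^^ i) x)"

text \<open>Semisimple: annihilated by a nonzero separable polynomial (minimal polynomial separable).\<close>
definition semisimple_lin :: "('w::real_vector \<Rightarrow> 'w) \<Rightarrow> bool" where
  "semisimple_lin T \<longleftrightarrow> linear T \<and>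
     (\<exists>p. p \<noteq> 0 \<and> coprime p (pderiv p) \<and> (\<forall>x. poly_lin p T x = 0))"

definition nilpotent_lin :: "('w::real_vector \<Rightarrow> 'w) \<Rightarrow> bool" where
  "nilpotent_lin T \<longleftrightarrow> linear T \<and> (\<exists>k. \<forall>x. (T ^^ k) x = 0)"

definition is_semisimple_part :: "('w::real_vector \<Rightarrow> 'w) \<Rightarrow> ('w \<Rightarrow> 'w) \<Rightarrow> bool" where
  "is_semisimple_part S L \<longleftrightarrow> semisimple_lin S \<and> nilpotent_lin (\<lambda>x. L x - S x)
      \<and> S \<circ> L = L \<circ> S"

text \<open>Projections for W = im S (+) ker S.\<close>
definition ker_part :: "('w::real_vector \<Rightarrow> 'w) \<Rightarrow> 'w \<Rightarrow> 'w" where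
  "ker_part S x = (THE k. S k = 0 \<and> x - k \<in> range S)"

definition im_part :: "('w::real_vector \<Rightarrow> 'w) \<Rightarrow> 'w \<Rightarrow> 'w" where
  "im_part S x = x - ker_part S x"

end

theory Submission
  imports Defs
begin

lemma funpow_zero_lin: fixes T :: "'a::real_vector \<Rightarrow> 'a" shows "T 0 = 0 \<Longrightarrow> (T ^^ j) 0 = 0"
  by (induction j) (auto simp: funpow.simps)

lemma funpow_linear: fixes T :: "'a::real_vector \<Rightarrow> 'a" shows "linear T \<Longrightarrow> linear (T ^^ j)"
  by (induction j) (auto simp: funpow.simps linear_compose linear_id)

lemma poly_lin_ext:
  fixes T :: "'w::real_vector \<Rightarrow> 'w"
  assumes "n \<ge> degree p"
  shows "poly_lin p T x = (\<Sum>i\<le>n. coeff p i *\<^sub>R (T ^^ i) x)"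
  unfolding poly_lin_def
  by (rule sum.mono_neutral_left) (use assms in \<open>auto simp: coeff_eq_0\<close>)

lemma poly_lin_split:
  fixes T :: "'w::real_vector \<Rightarrow> 'w"
  shows "poly_lin p T x = coeff p 0 *\<^sub>R x + coeff p 1 *\<^sub>R T x
     + (\<Sum>i\<le>degree p. coeff p (Suc (Suc i)) *\<^sub>R (T ^^ (Suc (Suc i))) x)"
proof -
  have "poly_lin p T x = (\<Sum>i\<le>Suc (Suc (degree p)). coeff p i *\<^sub>R (T ^^ i) x)"
    by (rule poly_lin_ext) auto
  also have "\<dots> = coeff p 0 *\<^sub>R x + coeff p 1 *\<^sub>R T x
     + (\<Sum>i\<le>degree p. coeff p (Suc (Suc i)) *\<^sub>R (T ^^ (Suc (Suc i))) x)"
    apply (subst sum.atMost_Suc_shift)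
    apply (subst sum.atMost_Suc_shift)
    by (simp add: add.assoc funpow.simps del: sum.atMost_Suc)
  finally show ?thesis .
qed

lemma poly_lin_split2:
  fixes T :: "'w::real_vector \<Rightarrow> 'w"
  assumes "linear T"
  shows "poly_lin p T x = coeff p 0 *\<^sub>R x + coeff p 1 *\<^sub>R T x
     + T (T (\<Sum>i\<le>degree p. coeff p (Suc (Suc i)) *\<^sub>R (T ^^ i) x))"
proof -
  have "(\<Sum>i\<le>degree p. coeff p (Suc (Suc i)) *\<^sub>R (T ^^ (Suc (Suc i))) x)
     = T (T (\<Sum>i\<le>degree p. coeff p (Suc (Suc i)) *\<^sub>R (T ^^ i) x))"
  proof -
    have "T (T (\<Sum>i\<le>degree p. coeff p (Suc (Suc i)) *\<^sub>R (T ^^ i) x))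
        = (\<Sum>i\<le>degree p. coeff p (Suc (Suc i)) *\<^sub>R T (T ((T ^^ i) x)))"
      by (simp only: linear_sum[OF assms] linear_scale[OF assms])
    also have "\<dots> = (\<Sum>i\<le>degree p. coeff p (Suc (Suc i)) *\<^sub>R (T ^^ (Suc (Suc i))) x)"
      by (simp only: funpow.simps comp_apply)
    finally show ?thesis by (rule sym)
  qed
  thus ?thesis using poly_lin_split[of p T x] by simp
qed

lemma coprime_coeffs:
  assumes "coprime p (pderiv p)"
  shows "coeff p 0 \<noteq> 0 \<or> coeff p 1 \<noteq> (0::real)"
proof (rule ccontr)
  assume "\<not> ?thesis"
  hence c: "coeff p 0 = 0" "coeff p 1 = 0" by auto
  have "poly p 0 = 0" using c by (simp add: poly_0_coeff_0)
  hence "[:-0,1:] dvd p" using poly_eq_0_iff_dvd by blast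
  moreover have "poly (pderiv p) 0 = 0" using c by (simp add: poly_0_coeff_0 coeff_pderiv)
  hence "[:-0,1:] dvd pderiv p" using poly_eq_0_iff_dvd by blast
  ultimately have "is_unit [:-0,1::real:]" using assms coprime_common_divisor by blast
  thus False by (simp add: is_unit_iff_degree)
qed


lemma funpow_SS_zero:
  fixes T :: "'a::real_vector \<Rightarrow> 'a"
  assumes "T 0 = 0" "T (T x) = 0"
  shows "(T ^^ Suc (Suc i)) x = 0"
proof -
  have "(T ^^ Suc (Suc i)) x = (T ^^ i) (T (T x))"
    by (simp only: funpow_Suc_right comp_apply)
  thus ?thesis using assms funpow_zero_lin by metis
qed

lemma ss_ker2:
  fixes S :: "'a::real_vector \<Rightarrow> 'a"
  assumes ss: "semisimple_lin S" and h: "S (S x) = 0"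
  shows "S x = 0"
proof -
  obtain p where p: "coprime p (pderiv p)" "\<And>x. poly_lin p S x = 0"
    using ss unfolding semisimple_lin_def by blast
  have lin: "linear S" using ss unfolding semisimple_lin_def by blast
  have S0: "S 0 = 0" using lin linear_0 by blast
  have "poly_lin p S x = coeff p 0 *\<^sub>R x + coeff p 1 *\<^sub>R S x"
    using poly_lin_split[of p S x] funpow_SS_zero[OF S0 h] by simp
  hence e1: "coeff p 0 *\<^sub>R x + coeff p 1 *\<^sub>R S x = 0" using p by simp
  have h2: "S (S (S x)) = 0" using h S0 by simp
  have "poly_lin p S (S x) = coeff p 0 *\<^sub>R S x"
    using poly_lin_split[of p S "S x"] funpow_SS_zero[OF S0 h2] h by simp
  hence e2: "coeff p 0 *\<^sub>R S x = 0" using p by simp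
  show ?thesis
  proof (cases "coeff p 0 = 0")
    case True
    hence "coeff p 1 \<noteq> 0" using coprime_coeffs[OF p(1)] by blast
    moreover have "coeff p 1 *\<^sub>R S x = 0" using e1 True by simp
    ultimately show ?thesis by simp
  next
    case False
    thus ?thesis using e2 by simp
  qed
qed

lemma ss_decomp:
  fixes S :: "'a::real_vector \<Rightarrow> 'a"
  assumes ss: "semisimple_lin S"
  shows "\<exists>w. S x = S (S w)"
proof -
  obtain p where p: "coprime p (pderiv p)" "\<And>x. poly_lin p S x = 0"
    using ss unfolding semisimple_lin_def by blast
  have lin: "linear S" using ss unfolding semisimple_lin_def by blast
  define R where "R = (\<Sum>i\<le>degree p. coeff p (Suc (Suc i)) *\<^sub>R (S ^^ i) x)"
  have e: "coeff p 0 *\<^sub>R x + coeff p 1 *\<^sub>R S x + S (S R) = 0"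
    using poly_lin_split2[OF lin, of p x] p(2) unfolding R_def by simp
  show ?thesis
  proof (cases "coeff p 0 = 0")
    case True
    hence c1: "coeff p 1 \<noteq> 0" using coprime_coeffs[OF p(1)] by blast
    have e': "coeff p 1 *\<^sub>R S x = - S (S R)"
      using e True by (simp add: eq_neg_iff_add_eq_0 add.commute)
    have "S x = (1 / coeff p 1) *\<^sub>R (coeff p 1 *\<^sub>R S x)" using c1 by simp
    also have "\<dots> = - (1 / coeff p 1) *\<^sub>R S (S R)" using e' by simp
    also have "\<dots> = S (S (- (1 / coeff p 1) *\<^sub>R R))"
      by (simp add: linear_scale[OF lin] linear_neg[OF lin])
    finally show ?thesis by (rule exI)
  next
    case False
    have e'': "coeff p 0 *\<^sub>R x = - (coeff p 1 *\<^sub>R S x + S (S R))"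
      using e by (simp only: add.assoc eq_neg_iff_add_eq_0)
    have "x = (1 / coeff p 0) *\<^sub>R (coeff p 0 *\<^sub>R x)" using False by simp
    also have "\<dots> = - (1 / coeff p 0) *\<^sub>R (coeff p 1 *\<^sub>R S x + S (S R))" unfolding e'' by (simp only: scaleR_minus_left scaleR_minus_right)
    also have "\<dots> = S (- (1 / coeff p 0) *\<^sub>R (coeff p 1 *\<^sub>R x + S R))"
      by (simp add: linear_scale[OF lin] linear_neg[OF lin] linear_add[OF lin])
    finally have "S x = S (S (- (1 / coeff p 0) *\<^sub>R (coeff p 1 *\<^sub>R x + S R)))" by simp
    thus ?thesis by (rule exI)
  qed
qed

lemma ss_powker:
  fixes S :: "'a::real_vector \<Rightarrow> 'a"
  assumes ss: "semisimple_lin S"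
  shows "(S ^^ j) z = 0 \<Longrightarrow> S z = 0"
proof (induction j arbitrary: z)
  case 0
  have lin: "linear S" using ss unfolding semisimple_lin_def by blast
  then show ?case using 0 linear_0 by fastforce
next
  case (Suc j)
  have "(S ^^ j) (S z) = 0" using Suc.prems by (simp only: funpow_Suc_right comp_apply)
  hence "S (S z) = 0" using Suc.IH by blast
  thus ?case using ss_ker2[OF ss] by blast
qed


lemma ssp_basic:
  fixes S L :: "'a::real_vector \<Rightarrow> 'a"
  assumes "is_semisimple_part S L"
  shows "semisimple_lin S" "linear S" "\<And>x. S (L x) = L (S x)"
    "\<exists>K. \<forall>x. ((\<lambda>x. L x - S x) ^^ K) x = 0" "linear (\<lambda>x. L x - S x)"
  using assms unfolding is_semisimple_part_def semisimple_lin_def nilpotent_lin_def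
  by (auto simp: fun_eq_iff)

lemma ker_S_L:
  fixes S L :: "'a::real_vector \<Rightarrow> 'a"
  assumes "is_semisimple_part S L" "linear L"
  shows "S x = 0 \<Longrightarrow> (L ^^ j) x = ((\<lambda>x. L x - S x) ^^ j) x"
proof (induction j arbitrary: x)
  case 0 thus ?case by simp
next
  case (Suc j)
  note b = ssp_basic[OF assms(1)]
  have "S (L x - S x) = 0" using Suc.prems b(3)[of x]
    by (simp add: linear_diff[OF b(2)] linear_0[OF b(2)] linear_0[OF assms(2)])
  hence "(L ^^ j) (L x - S x) = ((\<lambda>x. L x - S x) ^^ j) (L x - S x)" using Suc.IH by blast
  thus ?case using Suc.prems by (simp only: funpow_Suc_right comp_apply) simp
qed

lemma kerL_Spow:
  fixes S L :: "'a::real_vector \<Rightarrow> 'a"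
  assumes "is_semisimple_part S L" "linear L"
  shows "L z = 0 \<Longrightarrow> (S ^^ j) z = (-1) ^ j *\<^sub>R ((\<lambda>x. L x - S x) ^^ j) z"
proof (induction j arbitrary: z)
  case 0 thus ?case by simp
next
  case (Suc j)
  note b = ssp_basic[OF assms(1)]
  define N where "N = (\<lambda>x. L x - S x)"
  have Nz: "N z = - S z" using Suc.prems unfolding N_def by simp
  have "L (N z) = - L (S z)" unfolding Nz using assms(2) linear_neg by blast
  also have "\<dots> = 0" using Suc.prems b(3)[of z] b(2) linear_0 by (metis neg_0_equal_iff_equal)
  finally have "L (N z) = 0" .
  hence IH: "(S ^^ j) (N z) = (-1) ^ j *\<^sub>R (N ^^ j) (N z)" using Suc.IH unfolding N_def by blast
  have "(S ^^ Suc j) z = (S ^^ j) (S z)" by (simp only: funpow_Suc_right comp_apply)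
  also have "\<dots> = (S ^^ j) (- N z)" using Nz by simp
  also have "\<dots> = - (S ^^ j) (N z)" using funpow_linear[OF b(2)] linear_neg by blast
  also have "\<dots> = (-1) ^ Suc j *\<^sub>R (N ^^ j) (N z)" using IH by simp
  also have "(N ^^ j) (N z) = (N ^^ Suc j) z" by (simp only: funpow_Suc_right comp_apply)
  finally show ?case unfolding N_def .
qed

lemma kerL_S:
  fixes S L :: "'a::real_vector \<Rightarrow> 'a"
  assumes "is_semisimple_part S L" "linear L" "L z = 0"
  shows "S z = 0"
proof -
  note b = ssp_basic[OF assms(1)]
  obtain K where K: "\<And>x. ((\<lambda>x. L x - S x) ^^ K) x = 0" using b(4) by blast
  have "(S ^^ K) z = 0" using kerL_Spow[OF assms(1,2,3), of K] K by simp
  thus ?thesis using ss_powker[OF b(1)] by blast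
qed

lemma kerLpow_S:
  fixes S L :: "'a::real_vector \<Rightarrow> 'a"
  assumes "is_semisimple_part S L" "linear L"
  shows "(L ^^ m) x = 0 \<Longrightarrow> S x = 0"
proof (induction m arbitrary: x)
  case 0
  thus ?case using ssp_basic(2)[OF assms(1)] linear_0 by fastforce
next
  case (Suc m)
  note b = ssp_basic[OF assms(1)]
  have "(L ^^ m) (L x) = 0" using Suc.prems by (simp only: funpow_Suc_right comp_apply)
  hence "S (L x) = 0" using Suc.IH by blast
  hence "L (S x) = 0" using b(3) by simp
  hence "S (S x) = 0" using kerL_S[OF assms] by blast
  thus ?case using ss_ker2[OF b(1)] by blast
qed

lemma kerS_eq:
  fixes S L :: "'a::real_vector \<Rightarrow> 'a"
  assumes "is_semisimple_part S L" "linear L"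
  shows "\<exists>K. \<forall>x. S x = 0 \<longleftrightarrow> (L ^^ K) x = 0"
proof -
  note b = ssp_basic[OF assms(1)]
  obtain K where K: "\<And>x. ((\<lambda>x. L x - S x) ^^ K) x = 0" using b(4) by blast
  have "S x = 0 \<longleftrightarrow> (L ^^ K) x = 0" for x
    using ker_S_L[OF assms, of x K] K kerLpow_S[OF assms] by metis
  thus ?thesis by blast
qed


lemma ker_range_0:
  fixes S :: "'a::real_vector \<Rightarrow> 'a"
  assumes "semisimple_lin S" "S y = 0" "y \<in> range S"
  shows "y = 0"
  using assms ss_ker2[OF assms(1)] by auto

lemma kp_prop:
  fixes S :: "'a::real_vector \<Rightarrow> 'a"
  assumes ss: "semisimple_lin S"
  shows "S (ker_part S x) = 0 \<and> x - ker_part S x \<in> range S"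
    "S k = 0 \<Longrightarrow> x - k \<in> range S \<Longrightarrow> ker_part S x = k"
proof -
  have lin: "linear S" using ss unfolding semisimple_lin_def by blast
  have uniq: "k1 = k2" if h: "S k1 = 0" "x - k1 \<in> range S" "S k2 = 0" "x - k2 \<in> range S" for k1 k2
  proof -
    obtain a b where ab: "x - k1 = S a" "x - k2 = S b" using h(2,4) by (metis image_iff)
    have "k1 - k2 = S (b - a)" using ab by (simp add: linear_diff[OF lin] algebra_simps)
    moreover have "S (k1 - k2) = 0" using h by (simp add: linear_diff[OF lin])
    ultimately have "k1 - k2 = 0" using ker_range_0[OF ss] by auto
    thus ?thesis by simp
  qed
  obtain w where w: "S x = S (S w)" using ss_decomp[OF ss] by blast
  have ex: "S (x - S w) = 0 \<and> x - (x - S w) \<in> range S" using w by (simp add: linear_diff[OF lin])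
  have "\<exists>!k. S k = 0 \<and> x - k \<in> range S" using ex uniq by blast
  hence th: "S (ker_part S x) = 0 \<and> x - ker_part S x \<in> range S"
    unfolding ker_part_def by (rule theI')
  thus "S (ker_part S x) = 0 \<and> x - ker_part S x \<in> range S" .
  show "S k = 0 \<Longrightarrow> x - k \<in> range S \<Longrightarrow> ker_part S x = k" using th uniq by blast
qed

theorem mainTheorem11:
  fixes A :: "'s::semigroup_mult \<Rightarrow> 'w::euclidean_space \<Rightarrow> 'w"
    and \<Gamma> :: "'w \<Rightarrow> real^'p \<Rightarrow> 'w"
    and X0 :: 'w and lam0 :: "real^'p"
    and L0 S :: "'w \<Rightarrow> 'w"
    and Xim :: "'w \<Rightarrow> real^'p \<Rightarrow> 'w"
    and U :: "('w \<times> (real^'p)) set" and V :: "'w set"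
  assumes rep: "representation A"
    and smooth: "smooth (\<lambda>(X, lam). \<Gamma> X lam)"
    and equiv: "\<And>\<sigma> X lam. \<Gamma> (A \<sigma> X) lam = A \<sigma> (\<Gamma> X lam)"
    and zero: "\<Gamma> X0 lam0 = 0"
    and fixed: "\<And>\<sigma>. A \<sigma> X0 = X0"
    and L0: "((\<lambda>X. \<Gamma> X lam0) has_derivative L0) (at X0)"
    and S: "is_semisimple_part S L0"
    \<comment> \<open>Xim is the implicit-function-theorem solution of the im-equation\<close>
    and U: "open U" "(ker_part S X0, lam0) \<in> U"
    and V: "open V" "im_part S X0 \<in> V"
    and Xim_cont: "continuous_on (U \<inter> ({x. S x = 0} \<times> UNIV)) (\<lambda>(x, lam). Xim x lam)"
    and Xim_base: "Xim (ker_part S X0) lam0 = im_part S X0"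
    and Xim_sol: "\<And>x lam. (x, lam) \<in> U \<Longrightarrow> S x = 0 \<Longrightarrow>
        Xim x lam \<in> range S \<inter> V \<and> im_part S (\<Gamma> (Xim x lam + x) lam) = 0"
    and Xim_uniq: "\<And>x lam y. (x, lam) \<in> U \<Longrightarrow> S x = 0 \<Longrightarrow> y \<in> range S \<inter> V \<Longrightarrow>
        im_part S (\<Gamma> (y + x) lam) = 0 \<Longrightarrow> y = Xim x lam"
  shows "subrep A {x. S x = 0} \<and> subrep A (range S) \<and>
    (\<forall>\<sigma>. \<exists>N. open N \<and> (ker_part S X0, lam0) \<in> N \<and>
       (\<forall>x lam. (x, lam) \<in> N \<and> S x = 0 \<longrightarrow>
          ker_part S (\<Gamma> (Xim (A \<sigma> x) lam + A \<sigma> x) lam)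
            = A \<sigma> (ker_part S (\<Gamma> (Xim x lam + x) lam))))"
proof -
  note b = ssp_basic[OF S]
  have linA: "\<And>\<sigma>. linear (A \<sigma>)" using rep unfolding representation_def by blast
  have blA: "\<And>\<sigma>. bounded_linear (A \<sigma>)" using linA linear_conv_bounded_linear by blast
  have linL: "linear L0" using has_derivative_bounded_linear[OF L0] bounded_linear.linear by blast
  have commAL: "A \<sigma> (L0 x) = L0 (A \<sigma> x)" for \<sigma> x
  proof -
    have L0': "((\<lambda>X. \<Gamma> X lam0) has_derivative L0) (at (A \<sigma> X0))" using L0 fixed by simp
    have d1: "((\<lambda>X. \<Gamma> (A \<sigma> X) lam0) has_derivative (\<lambda>x. L0 (A \<sigma> x))) (at X0)"
      using has_derivative_compose[OF bounded_linear_imp_has_derivative[OF blA] L0'] .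
    have d2: "((\<lambda>X. A \<sigma> (\<Gamma> X lam0)) has_derivative (\<lambda>x. A \<sigma> (L0 x))) (at X0)"
      using bounded_linear.has_derivative[OF blA L0] .
    have d1': "((\<lambda>X. A \<sigma> (\<Gamma> X lam0)) has_derivative (\<lambda>x. L0 (A \<sigma> x))) (at X0)"
      using d1 equiv by simp
    show ?thesis using fun_cong[OF has_derivative_unique[OF d2 d1'], of x] by simp
  qed
  have commALp: "A \<sigma> ((L0 ^^ j) x) = (L0 ^^ j) (A \<sigma> x)" for \<sigma> j x
    by (induction j) (auto simp: commAL)
  obtain K where K: "\<And>x. S x = 0 \<longleftrightarrow> (L0 ^^ K) x = 0" using kerS_eq[OF S linL] by blast
  have kerinv: "S (A \<sigma> x) = 0" if "S x = 0" for \<sigma> x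
  proof -
    have "(L0 ^^ K) (A \<sigma> x) = A \<sigma> ((L0 ^^ K) x)" using commALp by simp
    also have "\<dots> = 0" using K that linear_0[OF linA] by simp
    finally show ?thesis using K by blast
  qed
  define R where "R = range S"
  have subR: "subspace R" unfolding R_def using linear_subspace_image[OF b(2) subspace_UNIV] .
  have LR: "L0 ` R \<subseteq> R" unfolding R_def using b(3) by (auto simp del: ) (metis rangeI)
  have injL: "inj_on L0 R"
  proof (rule inj_onI)
    fix a c assume h: "a \<in> R" "c \<in> R" "L0 a = L0 c"
    have "a - c \<in> R" using subR h subspace_diff by blast
    moreover have "L0 (a - c) = 0" using h by (simp add: linear_diff[OF linL])
    hence "S (a - c) = 0" using kerL_S[OF S linL] by blast
    ultimately have "a - c = 0" using ker_range_0[OF b(1)] unfolding R_def by blast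
    thus "a = c" by simp
  qed
  have spR: "span R = R" using subR span_eq_iff by blast
  have "dim (L0 ` R) = dim R"
    using dim_image_eq[OF linL, of R] injL unfolding spR by blast
  hence LR_eq: "L0 ` R = R"
    using subspace_dim_equal[OF linear_subspace_image[OF linL subR] subR LR] by simp
  have LRp: "(L0 ^^ j) ` R = R" for j
  proof (induction j)
    case 0 thus ?case by simp
  next
    case (Suc j)
    have "(L0 ^^ Suc j) ` R = L0 ` ((L0 ^^ j) ` R)" by (simp only: funpow.simps(2) image_comp)
    also have "\<dots> = L0 ` R" by (simp only: Suc.IH)
    also have "\<dots> = R" by (rule LR_eq)
    finally show ?case .
  qed
  have rangeinv: "A \<sigma> y \<in> R" if "y \<in> R" for \<sigma> y
  proof -
    have "y \<in> (L0 ^^ K) ` R" using that LRp[of K] by simp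
    then obtain z where z: "y = (L0 ^^ K) z" by blast
    define k where "k = ker_part S (A \<sigma> z)"
    have k: "S k = 0" "A \<sigma> z - k \<in> R" using kp_prop(1)[OF b(1)] unfolding k_def R_def by auto
    have "A \<sigma> y = (L0 ^^ K) (A \<sigma> z)" using z commALp by simp
    also have "\<dots> = (L0 ^^ K) k + (L0 ^^ K) (A \<sigma> z - k)"
    proof -
      have "(L0 ^^ K) (A \<sigma> z) = (L0 ^^ K) (k + (A \<sigma> z - k))" by simp
      also have "\<dots> = (L0 ^^ K) k + (L0 ^^ K) (A \<sigma> z - k)"
        by (rule linear_add[OF funpow_linear[OF linL]])
      finally show ?thesis .
    qed
    also have "(L0 ^^ K) k = 0" using K k by blast
    finally have "A \<sigma> y = (L0 ^^ K) (A \<sigma> z - k)" by simp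
    thus ?thesis using LRp[of K] k(2) by blast
  qed
  have kpA: "ker_part S (A \<sigma> x) = A \<sigma> (ker_part S x)" for \<sigma> x
  proof (rule kp_prop(2)[OF b(1)])
    show "S (A \<sigma> (ker_part S x)) = 0" using kerinv kp_prop(1)[OF b(1)] by blast
    have "A \<sigma> x - A \<sigma> (ker_part S x) = A \<sigma> (x - ker_part S x)" by (simp add: linear_diff[OF linA])
    moreover have "x - ker_part S x \<in> R" using kp_prop(1)[OF b(1)] unfolding R_def by blast
    ultimately show "A \<sigma> x - A \<sigma> (ker_part S x) \<in> range S"
      using rangeinv unfolding R_def by simp
  qed
  have ipA: "im_part S (A \<sigma> x) = A \<sigma> (im_part S x)" for \<sigma> x
    unfolding im_part_def by (simp add: kpA linear_diff[OF linA])
  have sub1: "subrep A {x. S x = 0}"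
  proof -
    have "subspace {x. S x = 0}" unfolding subspace_def
      using linear_0[OF b(2)] linear_add[OF b(2)] linear_scale[OF b(2)] by auto
    thus ?thesis unfolding subrep_def using kerinv by blast
  qed
  have sub2: "subrep A (range S)"
    unfolding subrep_def using subR rangeinv unfolding R_def by blast
  have part3: "\<exists>N. open N \<and> (ker_part S X0, lam0) \<in> N \<and>
       (\<forall>x lam. (x, lam) \<in> N \<and> S x = 0 \<longrightarrow>
          ker_part S (\<Gamma> (Xim (A \<sigma> x) lam + A \<sigma> x) lam)
            = A \<sigma> (ker_part S (\<Gamma> (Xim x lam + x) lam)))" for \<sigma>
  proof -
    define D where "D = U \<inter> ({x. S x = 0} \<times> UNIV)"
    define f where "f = (\<lambda>(x, lam). A \<sigma> (Xim x lam))"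
    have cf: "continuous_on D f"
    proof -
      have "continuous_on D (A \<sigma> \<circ> (\<lambda>(x, lam). Xim x lam))"
        using continuous_on_compose[OF Xim_cont[folded D_def] linear_continuous_on[OF blA]] .
      thus ?thesis unfolding f_def by (simp add: o_def case_prod_beta)
    qed
    obtain T where T: "open T" "T \<inter> D = f -` V \<inter> D"
      using continuous_on_open_invariant[THEN iffD1, OF cf, rule_format, OF V(1)] by blast
    define g where "g = (\<lambda>p::'w \<times> (real^'p). (A \<sigma> (fst p), snd p))"
    have "bounded_linear g" unfolding g_def
      by (intro bounded_linear_Pair bounded_linear_compose[OF blA] bounded_linear_fst bounded_linear_snd)
    hence cg: "continuous_on UNIV g" by (rule linear_continuous_on)
    define G where "G = g -` U"
    have oG: "open G" unfolding G_def using open_vimage[OF U(1) cg] .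
    define N where "N = U \<inter> T \<inter> G"
    have "open N" unfolding N_def using U(1) T(1) oG by blast
    moreover have "(ker_part S X0, lam0) \<in> N"
    proof -
      have kA: "A \<sigma> (ker_part S X0) = ker_part S X0" using kpA[of \<sigma> X0] fixed by simp
      have iA: "A \<sigma> (im_part S X0) = im_part S X0" using ipA[of \<sigma> X0] fixed by simp
      have inD: "(ker_part S X0, lam0) \<in> D" unfolding D_def using U(2) kp_prop(1)[OF b(1)] by blast
      have "f (ker_part S X0, lam0) \<in> V" unfolding f_def using Xim_base iA V(2) by simp
      hence "(ker_part S X0, lam0) \<in> T" using T(2) inD by blast
      moreover have "(ker_part S X0, lam0) \<in> G" unfolding G_def g_def using kA U(2) by simp
      ultimately show ?thesis unfolding N_def using U(2) by blast
    qed
    moreover have "ker_part S (\<Gamma> (Xim (A \<sigma> x) lam + A \<sigma> x) lam)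
            = A \<sigma> (ker_part S (\<Gamma> (Xim x lam + x) lam))" if h: "(x, lam) \<in> N" "S x = 0" for x lam
    proof -
      have inD: "(x, lam) \<in> D" unfolding D_def using h unfolding N_def by blast
      hence "f (x, lam) \<in> V" using T(2) h(1) unfolding N_def by blast
      hence AV: "A \<sigma> (Xim x lam) \<in> V" unfolding f_def by simp
      have U1: "(x, lam) \<in> U" using h unfolding N_def by blast
      have U2: "(A \<sigma> x, lam) \<in> U" using h unfolding N_def G_def g_def by simp
      have S2: "S (A \<sigma> x) = 0" using kerinv h(2) by blast
      have sol: "Xim x lam \<in> range S \<inter> V" "im_part S (\<Gamma> (Xim x lam + x) lam) = 0"
        using Xim_sol[OF U1 h(2)] by auto
      have AR: "A \<sigma> (Xim x lam) \<in> range S" using rangeinv sol(1) unfolding R_def by blast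
      have eqG: "\<Gamma> (A \<sigma> (Xim x lam) + A \<sigma> x) lam = A \<sigma> (\<Gamma> (Xim x lam + x) lam)"
      proof -
        have "A \<sigma> (Xim x lam) + A \<sigma> x = A \<sigma> (Xim x lam + x)" by (simp add: linear_add[OF linA])
        thus ?thesis using equiv by simp
      qed
      have "im_part S (\<Gamma> (A \<sigma> (Xim x lam) + A \<sigma> x) lam) = 0"
        unfolding eqG ipA sol(2) using linear_0[OF linA] by simp
      hence "A \<sigma> (Xim x lam) = Xim (A \<sigma> x) lam"
        using Xim_uniq[OF U2 S2] AR AV by blast
      hence "ker_part S (\<Gamma> (Xim (A \<sigma> x) lam + A \<sigma> x) lam)
          = ker_part S (\<Gamma> (A \<sigma> (Xim x lam) + A \<sigma> x) lam)" by simp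
      also have "\<dots> = ker_part S (A \<sigma> (\<Gamma> (Xim x lam + x) lam))" by (simp only: eqG)
      also have "\<dots> = A \<sigma> (ker_part S (\<Gamma> (Xim x lam + x) lam))" by (rule kpA)
      finally show ?thesis .
    qed
    ultimately show ?thesis by blast
  qed
  show ?thesis using sub1 sub2 part3 by blast
qed

end
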